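(* Let $0<\delta_0\le 1/253$ and $\lambda,\mu,R>0$. Assume Condition (C3), $\mu^2\le \delta_0R^2/(2J^2(g^0))$ (vacuous if $J(g^0)=0$), and $$\frac{4\lambda^2 s_0}{\Lambda_{\tilde X,\min}^2}\le \delta_0R^2.$$ Suppose the realized data $(X,Z,E)$ lie in $\mathcal T(\delta_0,R)$, i.e. $$\sup_{f\in\mathcal F(R)}\big|\|f\|_n^2-\|f\|^2\big|\le\delta_0R^2\quad\text{and}\quad \sup_{f\in\mathcal F(R)}\big|E^Tf(X,Z)\big|/n\le \delta_0R^2.$$ Then every minimizer $(\hat\beta,\hat g)$ of the doubly penalised least squares criterion satisfies $\tau(\hat f-f^0)\le R$.
   Context: Setting. Let $(x,z)$ be a random vector with $x\in\mathbb R^p$ (a row vector) and $z\in\mathbb R^d$, joint distribution $Q$ and marginal $Q_z$ of $z$; let $(x_i,z_i)$, $i=1,\dots,n$, be i.i.d. copies of $(x,z)$, and let $X$ be the $n\times p$ matrix with rows $x_i$. Let $\mathcal G$ be a linear subspace of $L_2(Q_z)$ equipped with a semi-inner product $J(\cdot,\cdot)$ with associated seminorm $J(\cdot)$. Fix $\beta^0\in\mathbb R^p$, $g^0\in\mathcal G$; $S_0=\{j:\beta^0_j\neq 0\}$, $s_0=|S_0|$. The responses are $Y=X\beta^0+g^0(Z)+E\in\mathbb R^n$, where $g(Z)=(g(z_1),\dots,g(z_n))^T$ and $E=(e_1,\dots,e_n)^T$. For a function $f$ of $(x,z)$: $\|f\|^2=\mathbb E f(x,z)^2$, $\|f\|_n^2=\frac1n\sum_{i=1}^n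 f(x_i,z_i)^2$. For $\beta\in\mathbb R^p$, $g\in\mathcal G$, write $f=X\beta+g$ for the function $(x,z)\mapsto x\beta+g(z)$ (and also for the vector $f(X,Z)=X\beta+g(Z)$); $f^0=X\beta^0+g^0$. Let $h(z)=\mathbb E[x\mid z]$, $\tilde x=x-h(z)$; $\Lambda_{\tilde X,\min}^2$ is the smallest eigenvalue of $\mathbb E[\tilde x^T\tilde x]$ and $\Lambda_{h,\max}^2$ the largest eigenvalue of $\mathbb E[h(z)^Th(z)]$. Condition (C3): $\Lambda_{\tilde X,\min}>0$ and $\Lambda_{h,\max}<\infty$. Estimator: $(\hat\beta,\hat g)$ minimizes over $\mathbb R^p\times\mathcal G$ the criterion $\|Y-X\beta-g(Z)\|_n^2+\lambda\|\beta\|_1+\mu^2J^2(g)$, where $\|v\|_n^2=v^Tv/n$; $\hat f=X\hat\beta+\hat g$. For a pair $(\beta,g)$ with $f=X\beta+g$: $\tau(f)=\frac{\lambda\|\beta\|_1}{R\sqrt{\delta_0/2}}+\sqrt{\|X\beta+g\|^2+\mu^2J^2(g)}$ (with $\hat f-f^0$ corresponding to $(\hat\beta-\beta^0,\hat g-g^0)$), and $\mathcal F(R)$ is the set of all $f=X\beta+g$, $\beta\in\mathbb R^p$, $g\in\mathcal G$, with $\tau(f)\le R$. *)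

theory Defs
  imports "HOL-Probability.Probability"
begin

(* Q: joint law of (x,z) on R^p x R^d; x = fst, z = snd. *)

text \<open>Linear subspace of functions z |-> g z (elements of L2(Q_z), represented by functions).\<close>
definition lin_subspace :: "('d \<Rightarrow> real) set \<Rightarrow> bool" where
  "lin_subspace G \<longleftrightarrow> (\<lambda>_. 0) \<in> G \<and> (\<forall>g\<in>G. \<forall>g'\<in>G. (\<lambda>z. g z + g' z) \<in> G)
     \<and> (\<forall>g\<in>G. \<forall>c::real. (\<lambda>z. c * g z) \<in> G)"

definition subspace_L2 :: "(('a::euclidean_space) \<times> ('b::euclidean_space)) measure \<Rightarrow> ('b \<Rightarrow> real) set \<Rightarrow> bool" where
  "subspace_L2 Q G \<longleftrightarrow> lin_subspace G \<and>
     (\<forall>g\<in>G. g \<in> borel_measurable borel \<and> integrable Q (\<lambda>\<omega>. (g (snd \<omega>))\<^sup>2))"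

definition semi_inner :: "('d \<Rightarrow> real) set \<Rightarrow> (('d \<Rightarrow> real) \<Rightarrow> ('d \<Rightarrow> real) \<Rightarrow> real) \<Rightarrow> bool" where
  "semi_inner G Jip \<longleftrightarrow>
     (\<forall>g\<in>G. \<forall>g'\<in>G. Jip g g' = Jip g' g) \<and>
     (\<forall>g\<in>G. \<forall>g'\<in>G. \<forall>k\<in>G. Jip (\<lambda>z. g z + g' z) k = Jip g k + Jip g' k) \<and>
     (\<forall>g\<in>G. \<forall>k\<in>G. \<forall>c::real. Jip (\<lambda>z. c * g z) k = c * Jip g k) \<and>
     (\<forall>g\<in>G. Jip g g \<ge> 0)"

definition Jsq :: "(('d \<Rightarrow> real) \<Rightarrow> ('d \<Rightarrow> real) \<Rightarrow> real) \<Rightarrow> ('d \<Rightarrow> real) \<Rightarrow> real" where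
  "Jsq Jip g = Jip g g"

text \<open>h_j(z) = E[x_j | z], as a sigma(z)-measurable function of (x,z).\<close>
definition hcomp :: "((real^'p) \<times> (real^'d)) measure \<Rightarrow> 'p \<Rightarrow> ((real^'p) \<times> (real^'d)) \<Rightarrow> real" where
  "hcomp Q j = real_cond_exp Q (vimage_algebra (space Q) snd borel) (\<lambda>\<omega>. fst \<omega> $ j)"

definition xtil :: "((real^'p) \<times> (real^'d)) measure \<Rightarrow> 'p \<Rightarrow> ((real^'p) \<times> (real^'d)) \<Rightarrow> real" where
  "xtil Q j \<omega> = fst \<omega> $ j - hcomp Q j \<omega>"

definition Sigma_til :: "((real^'p) \<times> (real^'d)) measure \<Rightarrow> real^'p^'p" where
  "Sigma_til Q = (\<chi> j k. \<integral>\<omega>. xtil Q j \<omega> * xtil Q k \<omega> \<partial>Q)"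

definition min_eigenvalue :: "real^'n^'n \<Rightarrow> real" where
  "min_eigenvalue A = Min {c. \<exists>v. v \<noteq> 0 \<and> A *v v = c *\<^sub>R v}"

definition l1norm :: "real^'p \<Rightarrow> real" where
  "l1norm b = (\<Sum>j\<in>UNIV. \<bar>b $ j\<bar>)"

definition pop_sq :: "((real^'p) \<times> (real^'d)) measure \<Rightarrow> real^'p \<Rightarrow> (real^'d \<Rightarrow> real) \<Rightarrow> real" where
  "pop_sq Q b g = (\<integral>\<omega>. (fst \<omega> \<bullet> b + g (snd \<omega>))\<^sup>2 \<partial>Q)"

definition emp_sq :: "nat \<Rightarrow> (nat \<Rightarrow> real^'p) \<Rightarrow> (nat \<Rightarrow> real^'d) \<Rightarrow> real^'p \<Rightarrow> (real^'d \<Rightarrow> real) \<Rightarrow> real" where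
  "emp_sq n xs zs b g = (\<Sum>i<n. (xs i \<bullet> b + g (zs i))\<^sup>2) / real n"

definition tau :: "((real^'p) \<times> (real^'d)) measure \<Rightarrow> ((real^'d \<Rightarrow> real) \<Rightarrow> (real^'d \<Rightarrow> real) \<Rightarrow> real) \<Rightarrow>
    real \<Rightarrow> real \<Rightarrow> real \<Rightarrow> real \<Rightarrow> real^'p \<Rightarrow> (real^'d \<Rightarrow> real) \<Rightarrow> real" where
  "tau Q Jip lam mu R \<delta>0 b g =
     lam * l1norm b / (R * sqrt (\<delta>0 / 2)) + sqrt (pop_sq Q b g + mu\<^sup>2 * Jsq Jip g)"

definition crit :: "nat \<Rightarrow> (nat \<Rightarrow> real^'p) \<Rightarrow> (nat \<Rightarrow> real^'d) \<Rightarrow> (nat \<Rightarrow> real) \<Rightarrow>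
    ((real^'d \<Rightarrow> real) \<Rightarrow> (real^'d \<Rightarrow> real) \<Rightarrow> real) \<Rightarrow> real \<Rightarrow> real \<Rightarrow> real^'p \<Rightarrow> (real^'d \<Rightarrow> real) \<Rightarrow> real" where
  "crit n xs zs Y Jip lam mu b g =
     (\<Sum>i<n. (Y i - xs i \<bullet> b - g (zs i))\<^sup>2) / real n + lam * l1norm b + mu\<^sup>2 * Jsq Jip g"

end

theory Submission imports Defs begin
lemma sym_mv_inner:
  fixes A :: "real^'n^'n"
  assumes sym: "\<And>i j. A$i$j = A$j$i"
  shows "(A *v x) \<bullet> y = x \<bullet> (A *v y)"
proof -
  have "transpose A = A" using sym by (simp add: transpose_def vec_eq_iff)
  then have "A *v x = x v* A" by (metis vector_transpose_matrix)
  then show ?thesis by (simp add: dot_lmul_matrix)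
qed

lemma eig_finite:
  fixes A :: "real^'n^'n"
  assumes sym: "\<And>i j. A$i$j = A$j$i"
  shows "finite {c. \<exists>v. v \<noteq> 0 \<and> A *v v = c *\<^sub>R v}"
proof -
  define S where "S = {c. \<exists>v. v \<noteq> 0 \<and> A *v v = c *\<^sub>R v}"
  define ev where "ev c = (SOME v. v \<noteq> 0 \<and> A *v v = c *\<^sub>R v)" for c
  have ev: "ev c \<noteq> 0 \<and> A *v ev c = c *\<^sub>R ev c" if "c \<in> S" for c
  proof -
    have "\<exists>v. v \<noteq> 0 \<and> A *v v = c *\<^sub>R v" using that unfolding S_def by blast
    from someI_ex[OF this] show ?thesis unfolding ev_def .
  qed
  have orth: "ev c \<bullet> ev d = 0" if "c \<in> S" "d \<in> S" "c \<noteq> d" for c d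
  proof -
    have "c * (ev c \<bullet> ev d) = (A *v ev c) \<bullet> ev d" using ev[OF that(1)] by simp
    also have "\<dots> = ev c \<bullet> (A *v ev d)" by (rule sym_mv_inner[OF sym])
    also have "\<dots> = d * (ev c \<bullet> ev d)" using ev[OF that(2)] by simp
    finally show ?thesis using that(3) by simp
  qed
  have inj: "inj_on ev S"
  proof (rule inj_onI)
    fix c d assume "c \<in> S" "d \<in> S" "ev c = ev d"
    then show "c = d" using orth[of c d] ev[of c] by (metis inner_eq_zero_iff)
  qed
  have "pairwise orthogonal (ev ` S)"
    unfolding pairwise_def orthogonal_def using orth by auto
  moreover have "0 \<notin> ev ` S" using ev by auto
  ultimately have "independent (ev ` S)" by (rule pairwise_orthogonal_independent)
  then have "finite (ev ` S)" using independent_bound by blast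
  then show ?thesis using finite_imageD[OF _ inj] unfolding S_def by blast
qed

lemma quad_aux:
  fixes p a k :: real
  assumes "k > 0"
  shows "2 * (- p / k) * p + (- p / k)^2 * a = p^2 * (a - 2 * k) / k^2"
  using assms by (simp add: field_simps power2_eq_square)

lemma sym_quad_ge_min_eig:
  fixes A :: "real^'n^'n"
  assumes sym: "\<And>i j. A$i$j = A$j$i"
  shows "min_eigenvalue A * (v \<bullet> v) \<le> v \<bullet> (A *v v)"
proof -
  define q where "q w = w \<bullet> (A *v w)" for w :: "real^'n"
  have cont: "continuous_on (sphere 0 1) q"
    unfolding q_def by (intro continuous_intros linear_continuous_on matrix_vector_mul_linear)
  have ne: "sphere (0::real^'n) 1 \<noteq> {}" by simp
  obtain v0 where v0: "v0 \<in> sphere 0 1" and min: "\<And>y. y \<in> sphere 0 1 \<Longrightarrow> q v0 \<le> q y"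
    using continuous_attains_inf[OF compact_sphere ne cont] by blast
  define m where "m = q v0"
  have nv0: "norm v0 = 1" using v0 by simp
  have v0v0: "v0 \<bullet> v0 = 1" using nv0 by (simp add: dot_square_norm)
  have qsc: "q (a *\<^sub>R w) = a^2 * q w" for a w
    unfolding q_def by (simp add: matrix_vector_mult_scaleR power2_eq_square)
  have ray: "m * (w \<bullet> w) \<le> q w" for w
  proof (cases "w = 0")
    case True then show ?thesis by (simp add: q_def)
  next
    case False
    then have nw: "norm w > 0" by simp
    have "(inverse (norm w)) *\<^sub>R w \<in> sphere 0 1" using nw by simp
    then have "m \<le> q ((inverse (norm w)) *\<^sub>R w)" using min m_def by blast
    also have "\<dots> = q w / (norm w)^2" by (simp add: qsc power_inverse divide_inverse mult.commute)
    finally have "m * (norm w)^2 \<le> q w" using nw by (simp add: pos_le_divide_eq)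
    then show ?thesis by (simp add: dot_square_norm)
  qed
  define r where "r = A *v v0 - m *\<^sub>R v0"
  have expand: "q (v0 + s *\<^sub>R r) - m * ((v0 + s *\<^sub>R r) \<bullet> (v0 + s *\<^sub>R r))
      = 2 * s * (r \<bullet> r) + s^2 * (q r - m * (r \<bullet> r))" for s
  proof -
    define a where "a = r \<bullet> (A *v v0)"
    define b where "b = r \<bullet> v0"
    define rr where "rr = r \<bullet> r"
    have s1: "(A *v r) \<bullet> v0 = r \<bullet> (A *v v0)" by (rule sym_mv_inner[OF sym])
    have e1: "q (v0 + s *\<^sub>R r) = q v0 + 2 * s * a + s^2 * q r"
      unfolding q_def a_def using s1
      by (simp add: matrix_vector_right_distrib matrix_vector_mult_scaleR inner_add_left inner_add_right
           power2_eq_square algebra_simps inner_commute)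
    have e2: "(v0 + s *\<^sub>R r) \<bullet> (v0 + s *\<^sub>R r) = 1 + 2 * s * b + s^2 * rr"
      unfolding b_def rr_def using v0v0 by (simp add: inner_add_left inner_add_right power2_eq_square algebra_simps inner_commute)
    have e3: "rr = a - m * b"
      unfolding r_def rr_def a_def b_def by (simp add: inner_diff_right inner_diff_left inner_commute algebra_simps)
    have e4: "q v0 = m" by (simp add: m_def)
    show ?thesis unfolding rr_def[symmetric] e1 e2 e4 e3 by (simp add: algebra_simps)
  qed
  have nonneg: "0 \<le> 2 * s * (r \<bullet> r) + s^2 * (q r - m * (r \<bullet> r))" for s
    using ray[of "v0 + s *\<^sub>R r"] expand[of s] by linarith
  have rr: "r \<bullet> r = 0"
  proof (rule ccontr)
    assume "r \<bullet> r \<noteq> 0"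
    then have pos: "r \<bullet> r > 0" by (simp add: order_less_le)
    define a where "a = q r - m * (r \<bullet> r)"
    define s where "s = - (r \<bullet> r) / (\<bar>a\<bar> + 1)"
    have h: "0 \<le> 2 * s * (r \<bullet> r) + s^2 * a" using nonneg[of s] a_def by simp
    have "2 * s * (r \<bullet> r) + s^2 * a = (r \<bullet> r)^2 * (a - 2 * (\<bar>a\<bar> + 1)) / (\<bar>a\<bar>+1)^2"
      unfolding s_def by (rule quad_aux) auto
    moreover have "(r \<bullet> r)^2 * (a - 2 * (\<bar>a\<bar> + 1)) / (\<bar>a\<bar>+1)^2 < 0"
      using pos by (intro divide_neg_pos mult_pos_neg) auto
    ultimately show False using h by linarith
  qed
  then have "A *v v0 = m *\<^sub>R v0" unfolding r_def by simp
  moreover have "v0 \<noteq> 0" using nv0 by auto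
  ultimately have "m \<in> {c. \<exists>v. v \<noteq> 0 \<and> A *v v = c *\<^sub>R v}" by blast
  then have "min_eigenvalue A \<le> m" unfolding min_eigenvalue_def using eig_finite[OF sym] by simp
  then have "min_eigenvalue A * (v \<bullet> v) \<le> m * (v \<bullet> v)" by (simp add: mult_right_mono)
  also have "\<dots> \<le> q v" by (rule ray)
  finally show ?thesis unfolding q_def .
qed
definition L2 :: "'a measure \<Rightarrow> ('a \<Rightarrow> real) \<Rightarrow> bool" where
  "L2 M u \<longleftrightarrow> u \<in> borel_measurable M \<and> integrable M (\<lambda>w. (u w)^2)"

lemma L2_mult_int:
  assumes "L2 M u" "L2 M v"
  shows "integrable M (\<lambda>w. u w * v w)"
proof -
  have "integrable M (\<lambda>w. (u w)^2 + (v w)^2)" using assms unfolding L2_def by auto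
  moreover have "(\<lambda>w. u w * v w) \<in> borel_measurable M" using assms unfolding L2_def by auto
  moreover have "AE w in M. norm (u w * v w) \<le> norm ((u w)^2 + (v w)^2)"
  proof (rule AE_I2)
    fix w
    have "\<bar>u w * v w\<bar> \<le> (u w)^2 + (v w)^2"
    proof -
      have h1: "2 * \<bar>u w\<bar> * \<bar>v w\<bar> \<le> \<bar>u w\<bar>^2 + \<bar>v w\<bar>^2" by (rule sum_squares_bound)
      have h2: "0 \<le> \<bar>u w\<bar> * \<bar>v w\<bar>" by simp
      from h1 h2 have "\<bar>u w\<bar> * \<bar>v w\<bar> \<le> \<bar>u w\<bar>^2 + \<bar>v w\<bar>^2" by linarith
      then show ?thesis by (simp add: abs_mult)
    qed
    then show "norm (u w * v w) \<le> norm ((u w)^2 + (v w)^2)" by simp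
  qed
  ultimately show ?thesis by (rule Bochner_Integration.integrable_bound)
qed

lemma L2_add: "L2 M u \<Longrightarrow> L2 M v \<Longrightarrow> L2 M (\<lambda>w. u w + v w)"
proof -
  assume a: "L2 M u" "L2 M v"
  have "integrable M (\<lambda>w. (u w)^2 + 2 * (u w * v w) + (v w)^2)"
    using a L2_mult_int[OF a] unfolding L2_def by auto
  moreover have "(\<lambda>w. (u w + v w)^2) = (\<lambda>w. (u w)^2 + 2 * (u w * v w) + (v w)^2)"
    by (simp add: power2_sum algebra_simps)
  ultimately show ?thesis using a unfolding L2_def by (auto intro: borel_measurable_add)
qed

lemma L2_scale: "L2 M u \<Longrightarrow> L2 M (\<lambda>w. u w * c)"
  unfolding L2_def by (auto simp add: power_mult_distrib intro: borel_measurable_times)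

lemma L2_sum: "(\<And>j. j \<in> A \<Longrightarrow> L2 M (u j)) \<Longrightarrow> L2 M (\<lambda>w. \<Sum>j\<in>A. u j w)"
proof (induction A rule: infinite_finite_induct)
  case (infinite A) then show ?case by (simp add: L2_def)
next
  case empty then show ?case by (simp add: L2_def)
next
  case (insert x F) then show ?case by (simp add: L2_add)
qed

lemma pop_sq_lower:
  fixes Q :: "((real^'p) \<times> (real^'d)) measure" and g :: "real^'d \<Rightarrow> real"
  assumes Qprob: "prob_space Q" and Qsets: "sets Q = sets borel"
    and gmeas: "g \<in> borel_measurable borel" and gint: "integrable Q (\<lambda>\<omega>. (g (snd \<omega>))\<^sup>2)"
    and C3_xtil: "\<forall>j. integrable Q (\<lambda>\<omega>. (xtil Q j \<omega>)\<^sup>2)"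
    and C3_h: "\<forall>j. integrable Q (\<lambda>\<omega>. (hcomp Q j \<omega>)\<^sup>2)"
  shows "b \<bullet> (Sigma_til Q *v b) \<le> pop_sq Q b g"
proof -
  define F where "F = vimage_algebra (space Q) snd (borel :: (real^'d) measure)"
  have spQ: "space Q = UNIV" using sets_eq_imp_space_eq[OF Qsets] by simp
  have fstm: "(\<lambda>\<omega>. fst \<omega> $ j) \<in> borel_measurable Q" for j
    unfolding measurable_cong_sets[OF Qsets refl]
    by (intro borel_measurable_continuous_onI continuous_intros)
  have sndQ: "snd \<in> measurable Q (borel :: (real^'d) measure)"
    unfolding measurable_cong_sets[OF Qsets refl]
    by (intro borel_measurable_continuous_onI continuous_intros)
  have sndF: "snd \<in> measurable F (borel :: (real^'d) measure)"
    unfolding F_def by (rule measurable_vimage_algebra1) simp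
  have subalg: "subalgebra Q F"
    unfolding subalgebra_def
  proof
    show "space F = space Q" unfolding F_def by simp
    show "sets F \<subseteq> sets Q"
      unfolding F_def sets_vimage_algebra2[of snd "space Q" borel, simplified]
      using measurable_sets[OF sndQ] by auto
  qed
  interpret finite_measure Q using Qprob by (simp add: prob_space_def)
  interpret fms: finite_measure_subalgebra Q F
    by unfold_locales (rule subalg)
  interpret sigma_finite_subalgebra Q F
    by (rule finite_measure_subalgebra_is_sigma_finite) unfold_locales
  have hF: "hcomp Q j \<in> borel_measurable F" for j
    unfolding hcomp_def F_def by (rule borel_measurable_cond_exp)
  have hQ: "hcomp Q j \<in> borel_measurable Q" for j
    unfolding hcomp_def by (rule borel_measurable_cond_exp2)
  have gQ: "(\<lambda>\<omega>. g (snd \<omega>)) \<in> borel_measurable Q"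
    using measurable_compose[OF sndQ gmeas] by (simp add: comp_def)
  have gF: "(\<lambda>\<omega>. g (snd \<omega>)) \<in> borel_measurable F"
    using measurable_compose[OF sndF gmeas] by (simp add: comp_def)
  have L2h: "L2 Q (hcomp Q j)" for j unfolding L2_def using hQ C3_h by auto
  have L2x: "L2 Q (xtil Q j)" for j
  proof -
    have "xtil Q j = (\<lambda>\<omega>. fst \<omega> $ j - hcomp Q j \<omega>)" by (rule ext) (simp add: xtil_def)
    then have "xtil Q j \<in> borel_measurable Q" using fstm hQ by (simp add: borel_measurable_diff)
    then show ?thesis unfolding L2_def using C3_xtil by auto
  qed
  have L2fst: "L2 Q (\<lambda>\<omega>. fst \<omega> $ j)" for j
  proof -
    have "(\<lambda>\<omega>. fst \<omega> $ j) = (\<lambda>\<omega>. xtil Q j \<omega> + hcomp Q j \<omega>)" by (rule ext) (simp add: xtil_def)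
    then show ?thesis using L2_add[OF L2x L2h] by simp
  qed
  have L2g: "L2 Q (\<lambda>\<omega>. g (snd \<omega>))" unfolding L2_def using gQ gint by auto
  define a where "a \<omega> = (\<Sum>j\<in>UNIV. xtil Q j \<omega> * b $ j)" for \<omega>
  define c where "c \<omega> = (\<Sum>j\<in>UNIV. hcomp Q j \<omega> * b $ j) + g (snd \<omega>)" for \<omega>
  have L2a: "L2 Q a" unfolding a_def by (intro L2_sum L2_scale L2x)
  have L2c: "L2 Q c" unfolding c_def by (intro L2_add L2_sum L2_scale L2h L2g)
  have cF: "c \<in> borel_measurable F"
    unfolding c_def using hF gF by (intro borel_measurable_add borel_measurable_sum borel_measurable_times) auto
  have decomp: "fst \<omega> \<bullet> b + g (snd \<omega>) = a \<omega> + c \<omega>" for \<omega>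
    unfolding a_def c_def inner_vec_def by (simp add: xtil_def sum_subtractf algebra_simps)
  have iaa: "integrable Q (\<lambda>\<omega>. a \<omega> * a \<omega>)" by (rule L2_mult_int[OF L2a L2a])
  have iac: "integrable Q (\<lambda>\<omega>. a \<omega> * c \<omega>)" by (rule L2_mult_int[OF L2a L2c])
  have icc: "integrable Q (\<lambda>\<omega>. c \<omega> * c \<omega>)" by (rule L2_mult_int[OF L2c L2c])
  have "pop_sq Q b g = (\<integral>\<omega>. a \<omega> * a \<omega> + 2 * (a \<omega> * c \<omega>) + c \<omega> * c \<omega> \<partial>Q)"
    unfolding pop_sq_def decomp by (simp add: power2_eq_square algebra_simps)
  also have "\<dots> = (\<integral>\<omega>. a \<omega> * a \<omega> \<partial>Q) + 2 * (\<integral>\<omega>. a \<omega> * c \<omega> \<partial>Q) + (\<integral>\<omega>. c \<omega> * c \<omega> \<partial>Q)"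
    using iaa iac icc by simp
  finally have pe: "pop_sq Q b g = (\<integral>\<omega>. a \<omega> * a \<omega> \<partial>Q) + 2 * (\<integral>\<omega>. a \<omega> * c \<omega> \<partial>Q) + (\<integral>\<omega>. c \<omega> * c \<omega> \<partial>Q)" .
  have cc: "0 \<le> (\<integral>\<omega>. c \<omega> * c \<omega> \<partial>Q)" by (rule integral_nonneg_AE) simp
  have orth1: "(\<integral>\<omega>. xtil Q j \<omega> * c \<omega> \<partial>Q) = 0" for j
  proof -
    have i1: "integrable Q (\<lambda>\<omega>. c \<omega> * fst \<omega> $ j)" by (rule L2_mult_int[OF L2c L2fst])
    have i2: "integrable Q (\<lambda>\<omega>. c \<omega> * hcomp Q j \<omega>)" by (rule L2_mult_int[OF L2c L2h])
    have ce: "(\<integral>\<omega>. c \<omega> * real_cond_exp Q F (\<lambda>\<omega>. fst \<omega> $ j) \<omega> \<partial>Q) = (\<integral>\<omega>. c \<omega> * fst \<omega> $ j \<partial>Q)"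
      by (rule fms.real_cond_exp_intg(2)[OF i1 cF fstm])
    have "(\<integral>\<omega>. xtil Q j \<omega> * c \<omega> \<partial>Q) = (\<integral>\<omega>. c \<omega> * fst \<omega> $ j - c \<omega> * hcomp Q j \<omega> \<partial>Q)"
      by (simp add: xtil_def algebra_simps)
    also have "\<dots> = (\<integral>\<omega>. c \<omega> * fst \<omega> $ j \<partial>Q) - (\<integral>\<omega>. c \<omega> * hcomp Q j \<omega> \<partial>Q)"
      using i1 i2 by simp
    also have "\<dots> = 0" using ce unfolding hcomp_def F_def by simp
    finally show ?thesis .
  qed
  have ac0: "(\<integral>\<omega>. a \<omega> * c \<omega> \<partial>Q) = 0"
  proof -
    have "(\<integral>\<omega>. a \<omega> * c \<omega> \<partial>Q) = (\<integral>\<omega>. (\<Sum>j\<in>UNIV. b $ j * (xtil Q j \<omega> * c \<omega>)) \<partial>Q)"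
      unfolding a_def by (simp add: sum_distrib_right sum_distrib_left algebra_simps)
    also have "\<dots> = (\<Sum>j\<in>UNIV. b $ j * (\<integral>\<omega>. xtil Q j \<omega> * c \<omega> \<partial>Q))"
      using L2_mult_int[OF L2x L2c] by (simp add: integral_sum)
    also have "\<dots> = 0" using orth1 by simp
    finally show ?thesis .
  qed
  have aa: "(\<integral>\<omega>. a \<omega> * a \<omega> \<partial>Q) = b \<bullet> (Sigma_til Q *v b)"
  proof -
    have "(\<integral>\<omega>. a \<omega> * a \<omega> \<partial>Q) = (\<integral>\<omega>. (\<Sum>j\<in>UNIV. \<Sum>k\<in>UNIV. (b $ j * b $ k) * (xtil Q j \<omega> * xtil Q k \<omega>)) \<partial>Q)"
      unfolding a_def by (simp add: sum_product algebra_simps)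
    also have "\<dots> = (\<Sum>j\<in>UNIV. \<Sum>k\<in>UNIV. (b $ j * b $ k) * (\<integral>\<omega>. xtil Q j \<omega> * xtil Q k \<omega> \<partial>Q))"
      using L2_mult_int[OF L2x L2x] by (simp add: integral_sum)
    also have "\<dots> = b \<bullet> (Sigma_til Q *v b)"
      unfolding inner_vec_def matrix_vector_mult_def Sigma_til_def
      by (simp add: sum_distrib_left algebra_simps)
    finally show ?thesis .
  qed
  show ?thesis using pe cc ac0 aa by simp
qed

lemma G_comb:
  assumes "lin_subspace G" "g \<in> G" "d \<in> G"
  shows "(\<lambda>z. g z + s * d z) \<in> G" "(\<lambda>z. s * d z) \<in> G" "(\<lambda>z. g z - d z) \<in> G"
proof -
  have z: "(\<lambda>_. 0) \<in> G" and add: "\<And>g g'. g\<in>G \<Longrightarrow> g'\<in>G \<Longrightarrow> (\<lambda>z. g z + g' z) \<in> G"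
    and sc: "\<And>g c. g\<in>G \<Longrightarrow> (\<lambda>z. c * g z) \<in> G"
    using assms(1) unfolding lin_subspace_def by auto
  show s: "(\<lambda>z. s * d z) \<in> G" using sc assms(3) .
  show "(\<lambda>z. g z + s * d z) \<in> G" using add[OF assms(2) s] by simp
  have "(\<lambda>z. g z + (-1) * d z) \<in> G" using add[OF assms(2) sc[OF assms(3), of "-1"]] by simp
  then show "(\<lambda>z. g z - d z) \<in> G" by simp
qed

lemma J_expand:
  assumes J: "semi_inner G Jip" and G: "lin_subspace G" and g: "g \<in> G" and d: "d \<in> G"
  shows "Jsq Jip (\<lambda>z. g z + s * d z) = Jsq Jip g + 2 * s * Jip g d + s^2 * Jsq Jip d"
proof -
  have sym: "\<And>g g'. g\<in>G \<Longrightarrow> g'\<in>G \<Longrightarrow> Jip g g' = Jip g' g"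
    and add: "\<And>g g' k. g\<in>G \<Longrightarrow> g'\<in>G \<Longrightarrow> k\<in>G \<Longrightarrow> Jip (\<lambda>z. g z + g' z) k = Jip g k + Jip g' k"
    and sc: "\<And>g k c. g\<in>G \<Longrightarrow> k\<in>G \<Longrightarrow> Jip (\<lambda>z. c * g z) k = c * Jip g k"
    using J unfolding semi_inner_def by auto
  define k where "k = (\<lambda>z. s * d z)"
  have kG: "k \<in> G" unfolding k_def using G_comb[OF G g d] by simp
  define X where "X = (\<lambda>z. g z + k z)"
  have XG: "X \<in> G" unfolding X_def k_def using G_comb[OF G g d] by simp
  have "Jsq Jip (\<lambda>z. g z + s * d z) = Jip X X" unfolding Jsq_def X_def k_def by simp
  also have "\<dots> = Jip g X + Jip k X" unfolding X_def[of] using add[OF g kG XG] by (simp add: X_def)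
  also have "Jip g X = Jip g g + Jip k g"
    using sym[OF g XG] add[OF g kG g] sym[OF XG g] by (simp add: X_def)
  also have "Jip k X = Jip k g + Jip k k"
    using sym[OF kG XG] add[OF g kG kG] sym[OF XG kG] sym[OF g kG] by (simp add: X_def)
  also have "Jip k g = s * Jip g d" unfolding k_def using sc[OF d g] sym[OF d g] by simp
  also have "Jip k k = s^2 * Jip d d"
    unfolding k_def using sc[OF d kG, of s] sym[OF d kG] sc[OF d d, of s] unfolding k_def
    by (simp add: power2_eq_square)
  finally show ?thesis unfolding Jsq_def by simp
qed

lemma J_scale:
  assumes J: "semi_inner G Jip" and G: "lin_subspace G" and d: "d \<in> G"
  shows "Jsq Jip (\<lambda>z. s * d z) = s^2 * Jsq Jip d"
proof -
  have sym: "\<And>g g'. g\<in>G \<Longrightarrow> g'\<in>G \<Longrightarrow> Jip g g' = Jip g' g"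
    and sc: "\<And>g k c. g\<in>G \<Longrightarrow> k\<in>G \<Longrightarrow> Jip (\<lambda>z. c * g z) k = c * Jip g k"
    using J unfolding semi_inner_def by auto
  have kG: "(\<lambda>z. s * d z) \<in> G" using G_comb[OF G d d] by simp
  show ?thesis unfolding Jsq_def using sc[OF d kG, of s] sym[OF d kG] sc[OF d d, of s]
    by (simp add: power2_eq_square)
qed


lemma l1aux: "\<bar>x\<bar> - 2 * (if b \<noteq> 0 then \<bar>x\<bar> else 0) \<le> \<bar>(b::real) + x\<bar> - \<bar>b + 0 * y\<bar>"
proof (cases "b = 0")
  case True then show ?thesis by simp
next
  case False
  have "\<bar>b\<bar> \<le> \<bar>b + x\<bar> + \<bar>x\<bar>" using abs_triangle_ineq[of "b + x" "-x"] by simp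
  then show ?thesis using False by simp
qed

lemma sqrt_aux:
  fixes d :: real assumes "0 < d"
  shows "d / sqrt (d / 2) = sqrt (2 * d)"
proof -
  have "sqrt (d/2) * sqrt (2*d) = d" using assms by (simp add: real_sqrt_mult[symmetric])
  moreover have "sqrt (d/2) > 0" using assms by simp
  ultimately show ?thesis by (simp add: field_simps)
qed

theorem mainTheorem3:
  fixes Q :: "((real^'p) \<times> (real^'d)) measure"
    and G :: "(real^'d \<Rightarrow> real) set"
    and Jip :: "(real^'d \<Rightarrow> real) \<Rightarrow> (real^'d \<Rightarrow> real) \<Rightarrow> real"
    and \<beta>0 :: "real^'p" and g0 :: "real^'d \<Rightarrow> real"
    and n :: nat and xs :: "nat \<Rightarrow> real^'p" and zs :: "nat \<Rightarrow> real^'d" and es :: "nat \<Rightarrow> real"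
    and \<delta>0 lam mu R :: real
    and \<beta>hat :: "real^'p" and ghat :: "real^'d \<Rightarrow> real"
  assumes Qprob: "prob_space Q" and Qsets: "sets Q = sets borel"
    and GL2: "subspace_L2 Q G" and Jsemi: "semi_inner G Jip"
    and g0G: "g0 \<in> G"
    and npos: "n > 0"
    and d0: "0 < \<delta>0" "\<delta>0 \<le> 1/253"
    and pos: "lam > 0" "mu > 0" "R > 0"
    \<comment> \<open>Condition (C3): E[tilde x^T tilde x] and E[h^T h] finite, Lambda_{tilde X,min} > 0\<close>
    and C3_xtil: "\<forall>j. integrable Q (\<lambda>\<omega>. (xtil Q j \<omega>)\<^sup>2)"
    and C3_h: "\<forall>j. integrable Q (\<lambda>\<omega>. (hcomp Q j \<omega>)\<^sup>2)"
    and C3_min: "min_eigenvalue (Sigma_til Q) > 0"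
    and mu_cond: "Jsq Jip g0 \<noteq> 0 \<longrightarrow> mu\<^sup>2 \<le> \<delta>0 * R\<^sup>2 / (2 * Jsq Jip g0)"
    and lam_cond: "4 * lam\<^sup>2 * real (card {j. \<beta>0 $ j \<noteq> 0}) / min_eigenvalue (Sigma_til Q) \<le> \<delta>0 * R\<^sup>2"
    \<comment> \<open>the event T(delta0,R)\<close>
    and T1: "\<forall>b. \<forall>g\<in>G. tau Q Jip lam mu R \<delta>0 b g \<le> R \<longrightarrow>
               \<bar>emp_sq n xs zs b g - pop_sq Q b g\<bar> \<le> \<delta>0 * R\<^sup>2"
    and T2: "\<forall>b. \<forall>g\<in>G. tau Q Jip lam mu R \<delta>0 b g \<le> R \<longrightarrow>
               \<bar>(\<Sum>i<n. es i * (xs i \<bullet> b + g (zs i)))\<bar> / real n \<le> \<delta>0 * R\<^sup>2"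
    \<comment> \<open>(beta hat, g hat) minimises the criterion over R^p x G, with Y = X beta0 + g0(Z) + E\<close>
    and ghatG: "ghat \<in> G"
    and minimiser: "\<forall>b. \<forall>g\<in>G.
        crit n xs zs (\<lambda>i. xs i \<bullet> \<beta>0 + g0 (zs i) + es i) Jip lam mu \<beta>hat ghat
        \<le> crit n xs zs (\<lambda>i. xs i \<bullet> \<beta>0 + g0 (zs i) + es i) Jip lam mu b g"
  shows "tau Q Jip lam mu R \<delta>0 (\<beta>hat - \<beta>0) (\<lambda>z. ghat z - g0 z) \<le> R"
proof (rule ccontr)
  assume contra: "\<not> ?thesis"
  have GL: "lin_subspace G" using GL2 unfolding subspace_L2_def by auto
  have Gmeas: "\<And>g. g \<in> G \<Longrightarrow> g \<in> borel_measurable borel \<and> integrable Q (\<lambda>\<omega>. (g (snd \<omega>))\<^sup>2)"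
    using GL2 unfolding subspace_L2_def by auto
  have Jpos: "\<And>g. g \<in> G \<Longrightarrow> Jsq Jip g \<ge> 0" using Jsemi unfolding semi_inner_def Jsq_def by auto
  define db where "db = \<beta>hat - \<beta>0"
  define dg where "dg = (\<lambda>z. ghat z - g0 z)"
  have dgG: "dg \<in> G" unfolding dg_def using G_comb(3)[OF GL ghatG g0G] .
  define T where "T = tau Q Jip lam mu R \<delta>0 db dg"
  have TR: "T > R" using contra unfolding T_def db_def dg_def by simp
  define t where "t = R / T"
  have Tpos: "T > 0" using TR pos by simp
  have t0: "0 < t" unfolding t_def using pos Tpos by simp
  have t1: "t < 1" unfolding t_def using TR Tpos by simp
  have tT: "t * T = R" unfolding t_def using Tpos by simp
  define Db where "Db = t *\<^sub>R db"
  define Dg where "Dg = (\<lambda>z. t * dg z)"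
  have DgG: "Dg \<in> G" unfolding Dg_def using G_comb(2)[OF GL g0G dgG] .
  define J0 where "J0 = Jsq Jip g0"
  define C where "C = Jip g0 dg"
  define JA where "JA = Jsq Jip dg"
  have JA0: "JA \<ge> 0" unfolding JA_def using Jpos[OF dgG] .
  have J00: "J0 \<ge> 0" unfolding J0_def using Jpos[OF g0G] .
  have Jexp: "Jsq Jip (\<lambda>z. g0 z + s * dg z) = J0 + 2 * s * C + s^2 * JA" for s
    unfolding J0_def C_def JA_def by (rule J_expand[OF Jsemi GL g0G dgG])
  have Jexp_nn: "0 \<le> J0 + 2 * s * C + s^2 * JA" for s
    using Jexp[of s] Jpos[OF G_comb(1)[OF GL g0G dgG, of s]] by simp
  have JD: "Jsq Jip Dg = t^2 * JA" unfolding Dg_def JA_def by (rule J_scale[OF Jsemi GL dgG])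
  have popD: "pop_sq Q Db Dg = t^2 * pop_sq Q db dg"
  proof -
    have "(\<lambda>\<omega>. (fst \<omega> \<bullet> Db + Dg (snd \<omega>))\<^sup>2) = (\<lambda>\<omega>. t^2 * (fst \<omega> \<bullet> db + dg (snd \<omega>))\<^sup>2)"
      unfolding Db_def Dg_def by (rule ext) (simp add: power2_eq_square algebra_simps)
    then show ?thesis unfolding pop_sq_def by simp
  qed
  have l1D: "l1norm Db = t * l1norm db"
    unfolding l1norm_def Db_def using t0 by (simp add: abs_mult sum_distrib_left)
  have tauD: "tau Q Jip lam mu R \<delta>0 Db Dg = R"
  proof -
    have "sqrt (pop_sq Q Db Dg + mu\<^sup>2 * Jsq Jip Dg) = t * sqrt (pop_sq Q db dg + mu\<^sup>2 * Jsq Jip dg)"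
    proof -
      have "pop_sq Q Db Dg + mu\<^sup>2 * Jsq Jip Dg = t^2 * (pop_sq Q db dg + mu\<^sup>2 * Jsq Jip dg)"
        unfolding popD JD JA_def by (simp add: algebra_simps)
      then show ?thesis using t0 by (simp add: real_sqrt_mult)
    qed
    then have "tau Q Jip lam mu R \<delta>0 Db Dg = t * T"
      unfolding tau_def T_def l1D by (simp add: algebra_simps)
    then show ?thesis using tT by simp
  qed
  define P where "P = pop_sq Q Db Dg"
  define w where "w i = xs i \<bullet> Db + Dg (zs i)" for i
  define Em where "Em = emp_sq n xs zs Db Dg"
  define Ee where "Ee = (\<Sum>i<n. es i * w i) / real n"
  have f1: "\<bar>Em - P\<bar> \<le> \<delta>0 * R\<^sup>2" unfolding Em_def P_def using T1 DgG tauD by auto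
  have f2: "\<bar>Ee\<bar> \<le> \<delta>0 * R\<^sup>2"
  proof -
    have "\<bar>(\<Sum>i<n. es i * w i)\<bar> / real n \<le> \<delta>0 * R\<^sup>2" unfolding w_def using T2 DgG tauD by auto
    then show ?thesis unfolding Ee_def by simp
  qed
  define Y where "Y = (\<lambda>i. xs i \<bullet> \<beta>0 + g0 (zs i) + es i)"
  define u where "u i = xs i \<bullet> db + dg (zs i)" for i
  define L where "L s = (\<Sum>j\<in>UNIV. \<bar>\<beta>0 $ j + s * db $ j\<bar>)" for s
  define Fs where "Fs s = (\<Sum>i<n. (es i - s * u i)^2) / real n + lam * L s + mu^2 * (J0 + 2 * s * C + s^2 * JA)" for s
  have crit_s: "crit n xs zs Y Jip lam mu (\<beta>0 + s *\<^sub>R db) (\<lambda>z. g0 z + s * dg z) = Fs s" for s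
  proof -
    have "Y i - xs i \<bullet> (\<beta>0 + s *\<^sub>R db) - (g0 (zs i) + s * dg (zs i)) = es i - s * u i" for i
      unfolding Y_def u_def by (simp add: inner_add_right algebra_simps)
    moreover have "l1norm (\<beta>0 + s *\<^sub>R db) = L s" unfolding l1norm_def L_def by simp
    ultimately show ?thesis unfolding crit_def Fs_def using Jexp[of s] by simp
  qed
  have F1: "Fs 1 = crit n xs zs Y Jip lam mu \<beta>hat ghat"
  proof -
    have "\<beta>0 + 1 *\<^sub>R db = \<beta>hat" "(\<lambda>z. g0 z + 1 * dg z) = ghat" unfolding db_def dg_def by auto
    then show ?thesis using crit_s[of 1] by simp
  qed
  have F0: "Fs 0 = crit n xs zs Y Jip lam mu \<beta>0 g0"
    using crit_s[of 0] by simp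
  have F10: "Fs 1 \<le> Fs 0" unfolding F1 F0 Y_def using minimiser g0G by blast
  have conv: "Fs t \<le> (1 - t) * Fs 0 + t * Fs 1"
  proof -
    have sq: "(\<Sum>i<n. (es i - t * u i)^2) \<le> (1 - t) * (\<Sum>i<n. (es i - 0 * u i)^2) + t * (\<Sum>i<n. (es i - 1 * u i)^2)"
    proof -
      have "(es i - t * u i)^2 \<le> (1 - t) * (es i)^2 + t * (es i - u i)^2" for i
      proof -
        have "(1 - t) * (es i)^2 + t * (es i - u i)^2 - (es i - t * u i)^2 = t * (1 - t) * (u i)^2"
          by (simp add: power2_eq_square algebra_simps)
        moreover have "0 \<le> t * (1 - t) * (u i)^2" using t0 t1 by simp
        ultimately show ?thesis by linarith
      qed
      then have "(\<Sum>i<n. (es i - t * u i)^2) \<le> (\<Sum>i<n. (1 - t) * (es i)^2 + t * (es i - u i)^2)"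
        by (rule sum_mono)
      then show ?thesis by (simp add: sum.distrib sum_distrib_left)
    qed
    have sq': "(\<Sum>i<n. (es i - t * u i)^2) / real n \<le> (1 - t) * ((\<Sum>i<n. (es i - 0 * u i)^2) / real n) + t * ((\<Sum>i<n. (es i - 1 * u i)^2) / real n)"
    proof -
      have e: "((1 - t) * (\<Sum>i<n. (es i - 0 * u i)^2) + t * (\<Sum>i<n. (es i - 1 * u i)^2)) / real n
         = (1 - t) * ((\<Sum>i<n. (es i - 0 * u i)^2) / real n) + t * ((\<Sum>i<n. (es i - 1 * u i)^2) / real n)"
        by (simp only: add_divide_distrib times_divide_eq_right)
      show ?thesis using divide_right_mono[OF sq, of "real n"] unfolding e by simp
    qed
    have Lc: "L t \<le> (1 - t) * L 0 + t * L 1"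
    proof -
      have "\<bar>\<beta>0 $ j + t * db $ j\<bar> \<le> (1 - t) * \<bar>\<beta>0 $ j + 0 * db $ j\<bar> + t * \<bar>\<beta>0 $ j + 1 * db $ j\<bar>" for j
      proof -
        have "\<bar>\<beta>0 $ j + t * db $ j\<bar> = \<bar>(1 - t) * \<beta>0 $ j + t * (\<beta>0 $ j + db $ j)\<bar>" by (simp add: algebra_simps)
        also have "\<dots> \<le> \<bar>(1 - t) * \<beta>0 $ j\<bar> + \<bar>t * (\<beta>0 $ j + db $ j)\<bar>" by (rule abs_triangle_ineq)
        also have "\<dots> = (1 - t) * \<bar>\<beta>0 $ j\<bar> + t * \<bar>\<beta>0 $ j + db $ j\<bar>" using t0 t1 by (simp add: abs_mult)
        finally show ?thesis by simp
      qed
      then have "L t \<le> (\<Sum>j\<in>UNIV. (1 - t) * \<bar>\<beta>0 $ j + 0 * db $ j\<bar> + t * \<bar>\<beta>0 $ j + 1 * db $ j\<bar>)"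
        unfolding L_def by (rule sum_mono)
      then show ?thesis unfolding L_def by (simp add: sum.distrib sum_distrib_left)
    qed
    have Jc: "J0 + 2 * t * C + t^2 * JA \<le> (1 - t) * (J0 + 2 * 0 * C + 0^2 * JA) + t * (J0 + 2 * 1 * C + 1^2 * JA)"
    proof -
      have "t^2 * JA \<le> t * JA" using t0 t1 JA0 by (simp add: power2_eq_square mult_right_mono)
      then show ?thesis by (simp add: algebra_simps)
    qed
    have "lam * L t \<le> (1 - t) * (lam * L 0) + t * (lam * L 1)"
      using mult_left_mono[OF Lc, of lam] pos by (simp add: algebra_simps)
    moreover have "mu^2 * (J0 + 2 * t * C + t^2 * JA) \<le> (1 - t) * (mu^2 * (J0 + 2 * 0 * C + 0^2 * JA)) + t * (mu^2 * (J0 + 2 * 1 * C + 1^2 * JA))"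
      using mult_left_mono[OF Jc, of "mu^2"] by (simp add: algebra_simps)
    ultimately show ?thesis unfolding Fs_def using sq' by (simp add: algebra_simps)
  qed
  have Ft0: "Fs t \<le> Fs 0"
  proof -
    have "t * Fs 1 \<le> t * Fs 0" using F10 t0 by simp
    then show ?thesis using conv by (simp add: algebra_simps)
  qed
  have wu: "w i = t * u i" for i unfolding w_def u_def Db_def Dg_def by (simp add: algebra_simps)
  have sqexp: "(\<Sum>i<n. (es i - t * u i)^2) / real n = (\<Sum>i<n. (es i)^2) / real n - 2 * Ee + Em"
  proof -
    have "(\<Sum>i<n. (es i - t * u i)^2) = (\<Sum>i<n. (es i)^2) - 2 * (\<Sum>i<n. es i * w i) + (\<Sum>i<n. (w i)^2)"
      unfolding wu by (simp add: power2_eq_square algebra_simps sum.distrib sum_subtractf sum_distrib_left)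
    moreover have "Em = (\<Sum>i<n. (w i)^2) / real n" unfolding Em_def emp_sq_def w_def by simp
    ultimately show ?thesis unfolding Ee_def by (simp only: diff_divide_distrib add_divide_distrib times_divide_eq_right)
  qed
  have star: "Em - 2 * Ee + lam * (L t - L 0) + mu^2 * (2 * t * C + t^2 * JA) \<le> 0"
  proof -
    have "Fs t - Fs 0 = Em - 2 * Ee + lam * (L t - L 0) + mu^2 * (2 * t * C + t^2 * JA)"
      unfolding Fs_def sqexp by (simp add: algebra_simps)
    then show ?thesis using Ft0 by linarith
  qed
  define SS where "SS = (\<Sum>j\<in>UNIV. if \<beta>0 $ j \<noteq> 0 then \<bar>Db $ j\<bar> else 0)"
  define l1 where "l1 = l1norm Db"
  have f3: "L t - L 0 \<ge> l1 - 2 * SS"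
  proof -
    have "\<bar>\<beta>0 $ j + t * db $ j\<bar> - \<bar>\<beta>0 $ j + 0 * db $ j\<bar> \<ge> \<bar>Db $ j\<bar> - 2 * (if \<beta>0 $ j \<noteq> 0 then \<bar>Db $ j\<bar> else 0)" for j
      unfolding Db_def vector_scaleR_component real_scaleR_def by (rule l1aux)
    then have "(\<Sum>j\<in>UNIV. \<bar>Db $ j\<bar> - 2 * (if \<beta>0 $ j \<noteq> 0 then \<bar>Db $ j\<bar> else 0)) \<le> (\<Sum>j\<in>UNIV. \<bar>\<beta>0 $ j + t * db $ j\<bar> - \<bar>\<beta>0 $ j + 0 * db $ j\<bar>)"
      by (rule sum_mono)
    then show ?thesis unfolding L_def l1_def SS_def l1norm_def by (simp add: sum_subtractf sum_distrib_left)
  qed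
  define \<Lambda> where "\<Lambda> = min_eigenvalue (Sigma_til Q)"
  have Lpos: "\<Lambda> > 0" unfolding \<Lambda>_def using C3_min .
  define s0 where "s0 = real (card {j. \<beta>0 $ j \<noteq> 0})"
  have f4: "2 * lam * SS \<le> 2 * lam^2 * s0 / \<Lambda> + \<Lambda> * (Db \<bullet> Db) / 2"
  proof -
    have pc: "2 * lam * (if \<beta>0 $ j \<noteq> 0 then \<bar>Db $ j\<bar> else 0) \<le> (if \<beta>0 $ j \<noteq> 0 then 2 * lam^2 / \<Lambda> else 0) + \<Lambda> * (Db $ j)^2 / 2" for j
    proof (cases "\<beta>0 $ j \<noteq> 0")
      case True
      have "2 * lam^2 / \<Lambda> + \<Lambda> * (Db $ j)^2 / 2 - 2 * lam * \<bar>Db $ j\<bar> = (2 / \<Lambda>) * (lam - \<Lambda> * \<bar>Db $ j\<bar> / 2)^2"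
        using Lpos by (simp add: field_simps power2_eq_square)
      moreover have "0 \<le> (2 / \<Lambda>) * (lam - \<Lambda> * \<bar>Db $ j\<bar> / 2)^2" using Lpos by simp
      ultimately show ?thesis using True by simp
    next
      case False then show ?thesis using Lpos by simp
    qed
    have "2 * lam * SS = (\<Sum>j\<in>UNIV. 2 * lam * (if \<beta>0 $ j \<noteq> 0 then \<bar>Db $ j\<bar> else 0))"
      unfolding SS_def by (simp add: sum_distrib_left)
    also have "\<dots> \<le> (\<Sum>j\<in>UNIV. (if \<beta>0 $ j \<noteq> 0 then 2 * lam^2 / \<Lambda> else 0) + \<Lambda> * (Db $ j)^2 / 2)"
      by (rule sum_mono) (rule pc)
    also have "\<dots> = (\<Sum>j\<in>UNIV. if \<beta>0 $ j \<noteq> 0 then 2 * lam^2 / \<Lambda> else 0) + \<Lambda> * (Db \<bullet> Db) / 2"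
      unfolding inner_vec_def by (simp add: sum.distrib sum_distrib_left sum_divide_distrib power2_eq_square)
    also have "(\<Sum>j\<in>UNIV. if \<beta>0 $ j \<noteq> 0 then 2 * lam^2 / \<Lambda> else (0::real)) = 2 * lam^2 / \<Lambda> * s0"
      unfolding s0_def using sum.inter_filter[of UNIV "\<lambda>j. 2 * lam^2 / \<Lambda>" "\<lambda>j. \<beta>0 $ j \<noteq> 0", symmetric]
      by simp
    finally show ?thesis by simp
  qed
  have f5: "\<Lambda> * (Db \<bullet> Db) \<le> P"
  proof -
    have sym: "\<And>i j. Sigma_til Q $ i $ j = Sigma_til Q $ j $ i" unfolding Sigma_til_def by (simp add: mult.commute)
    have "\<Lambda> * (Db \<bullet> Db) \<le> Db \<bullet> (Sigma_til Q *v Db)" unfolding \<Lambda>_def by (rule sym_quad_ge_min_eig[OF sym])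
    also have "\<dots> \<le> P" unfolding P_def
      using pop_sq_lower[OF Qprob Qsets _ _ C3_xtil C3_h] Gmeas[OF DgG] by blast
    finally show ?thesis .
  qed
  have f6: "4 * lam^2 * s0 / \<Lambda> \<le> \<delta>0 * R\<^sup>2" using lam_cond unfolding s0_def \<Lambda>_def .
  have f7: "2 * mu^2 * J0 \<le> \<delta>0 * R\<^sup>2"
  proof (cases "J0 = 0")
    case True then show ?thesis using d0 by simp
  next
    case False
    then have "J0 > 0" using J00 by simp
    moreover have "mu^2 \<le> \<delta>0 * R\<^sup>2 / (2 * J0)" using mu_cond False unfolding J0_def by simp
    ultimately show ?thesis by (simp add: field_simps)
  qed
  have f8: "mu^2 * (2 * t * C + t^2 * JA) \<ge> mu^2 * (t^2 * JA) / 2 - 2 * mu^2 * J0"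
  proof -
    have "0 \<le> J0 + 2 * (t/2) * C + (t/2)^2 * JA" by (rule Jexp_nn)
    then have "0 \<le> mu^2 * (J0 + 2 * (t/2) * C + (t/2)^2 * JA)" by simp
    then show ?thesis by (simp add: power2_eq_square algebra_simps)
  qed
  have lamf3: "lam * (L t - L 0) \<ge> lam * l1 - 2 * lam * SS"
    using mult_left_mono[OF f3, of lam] pos by (simp add: algebra_simps)
  have key: "P / 2 + mu^2 * (t^2 * JA) / 2 + lam * l1 \<le> 9/2 * (\<delta>0 * R\<^sup>2)"
    using star f1 f2 lamf3 f4 f5 f6 f7 f8 by (simp add: field_simps)
  have Pnn: "P \<ge> 0" unfolding P_def pop_sq_def by simp
  have JDn: "mu^2 * (t^2 * JA) \<ge> 0" using JA0 by simp
  have l1n: "l1 \<ge> 0" unfolding l1_def l1norm_def by (simp add: sum_nonneg)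
  have ll: "lam * l1 \<ge> 0" using pos l1n by simp
  have b1: "P + mu\<^sup>2 * Jsq Jip Dg \<le> 9 * \<delta>0 * R^2" unfolding JD using key ll by linarith
  have b2: "lam * l1 \<le> 9/2 * (\<delta>0 * R^2)" using key Pnn JDn by linarith
  have "sqrt (P + mu\<^sup>2 * Jsq Jip Dg) \<le> sqrt (9 * \<delta>0 * R^2)" using b1 by (rule real_sqrt_le_mono)
  also have "sqrt (9 * \<delta>0 * R^2) = 3 * R * sqrt \<delta>0" using pos d0 by (simp add: real_sqrt_mult)
  finally have s1: "sqrt (P + mu\<^sup>2 * Jsq Jip Dg) \<le> 3 * R * sqrt \<delta>0" .
  have rpos: "R * sqrt (\<delta>0 / 2) > 0" using pos d0 by simp
  have "lam * l1 / (R * sqrt (\<delta>0 / 2)) \<le> 9/2 * (\<delta>0 * R^2) / (R * sqrt (\<delta>0 / 2))"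
    using divide_right_mono[OF b2 less_imp_le[OF rpos]] .
  also have "\<dots> = 9/2 * R * (\<delta>0 / sqrt (\<delta>0 / 2))" using pos by (simp add: power2_eq_square field_simps)
  also have "\<dots> = 9/2 * R * sqrt (2 * \<delta>0)" using sqrt_aux[OF d0(1)] by simp
  finally have s2: "lam * l1 / (R * sqrt (\<delta>0 / 2)) \<le> 9/2 * R * sqrt (2 * \<delta>0)" .
  have q1: "sqrt (2 * \<delta>0) \<le> 9/100"
  proof -
    have "(9/100::real)^2 = 81/10000" by (simp add: power2_eq_square)
    then have "2 * \<delta>0 \<le> (9/100)^2" using d0 by simp
    then show ?thesis using real_sqrt_le_mono by fastforce
  qed
  have q2: "sqrt \<delta>0 \<le> 63/1000"
  proof -
    have "(63/1000::real)^2 = 3969/1000000" by (simp add: power2_eq_square)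
    then have "\<delta>0 \<le> (63/1000)^2" using d0 by simp
    then show ?thesis using real_sqrt_le_mono by fastforce
  qed
  have "tau Q Jip lam mu R \<delta>0 Db Dg = lam * l1 / (R * sqrt (\<delta>0 / 2)) + sqrt (P + mu\<^sup>2 * Jsq Jip Dg)"
    unfolding tau_def l1_def P_def ..
  also have "\<dots> \<le> 9/2 * R * sqrt (2 * \<delta>0) + 3 * R * sqrt \<delta>0" using s1 s2 by linarith
  also have "\<dots> \<le> 9/2 * R * (9/100) + 3 * R * (63/1000)"
    using q1 q2 pos by (intro add_mono mult_left_mono) auto
  also have "\<dots> < R" using pos by simp
  finally show False using tauD by simp
qed

end
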